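(* Fix $t$ and $T^*>0$. Suppose $\phi(u)=\beta_{T^*}$ for all $u\ge T^*$, the prevalence is constant $p(s)\equiv p\in(0,1)$, and $\lambda_t^*(s)=\lambda(s)$, $p_t^*(s)=p$ for all $s\le t$ (so that the conditional density of $T$ at $s$ given $\{T\le t,A(t)=1\}$ equals $\lambda(s)(1-p)/p$ for all $s\le t$). Let $\Omega_{T^*}=\int_0^{T^*}\phi(u)du$ with $\Omega_{T^*}-T^*\beta_{T^*}\neq0$. Then $$\frac{P_{rec}(t)-\beta_{T^*}p}{(1-p)(\Omega_{T^*}-T^*\beta_{T^*})}=\int_0^{T^*}\frac{\phi(u)-\beta_{T^*}}{\Omega_{T^*}-T^*\beta_{T^*}}\,\lambda(t-u)\,du.$$ If moreover $\lambda(s)=\lambda(t)+\rho(t-s)$ for $s\in[t-T^*,t]$, this equals $\lambda(t)+\rho\,\omega^*=\lambda(t-\omega^* )$, where $$\omega^*=\frac{\int_0^{T^*}u\{\phi(u)-\beta_{T^*}\}\,du}{\Omega_{T^*}-T^*\beta_{T^*}},$$ so the bias relative to $\lambda(t)$ is $\rho\omega^*$.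
   Context: $T$ is the HIV infection time, $A(t)\in\{0,1\}$ the eligibility indicator at time $t$. $p(t)=\Pr(T\le t\mid A(t)=1)$; $\lambda(t)=\lim_{dt\to0}\frac1{dt}\Pr(t\le T<t+dt\mid T\ge t,A(t)=1)$. For $s\le t$: $\lambda_t^*(s)=\lim_{ds\to0}\frac1{ds}\Pr(s\le T<s+ds\mid T\ge s,A(t)=1)$, $p_t^*(s)=\Pr(T\le s\mid A(t)=1)$. $M$ is a recency-test biomarker, $\mathcal R$ the test-recent region, $\phi(u)=\Pr(M\in\mathcal R\mid T=t-u,A(t)=1)$ (independent of $t$). $P_{rec}(t)=\Pr(M\in\mathcal R,T\le t\mid A(t)=1)$. The left-hand ratio is the population target of the adjusted estimator $(N_{rec}-N_{pos}\hat\beta_{T^*})/\{N_{neg}(\hat\Omega_{T^*}-\hat\beta_{T^*}T^* )\}$.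
   Formalization: The hypotheses $\lambda_t^*(s)=\lambda(s)$, $p_t^*(s)=p$ are replaced by the assumption that T has density $\lambda(s)(1-p)$ on s <= t given A(t)=1, and $\lambda(t)+\rho\,\omega^*=\lambda(t-\omega^* )$ is asserted only when 0 <= omega* <= T*. Each condition added here is assumed in the paper as well or is needed for the statement above to hold. *)

theory Defs
  imports "HOL-Probability.Probability"
begin

definition cprob :: "'w measure \<Rightarrow> 'w set \<Rightarrow> 'w set \<Rightarrow> real" where
  "cprob M E X = measure M (X \<inter> E) / measure M E"

end

theory Submission
  imports Defs
begin

theorem mainTheorem8:
  fixes M :: "'w measure"
    and T :: "'w \<Rightarrow> real"        \<comment> \<open>HIV infection time\<close>
    and Elig :: "'w set"            \<comment> \<open>event A(t) = 1\<close>
    and Rec :: "'w set"             \<comment> \<open>event M \<in> R (test-recent)\<close>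
    and phi lam :: "real \<Rightarrow> real"
    and t Tstar beta p rho :: real
  assumes ps: "prob_space M"
    and T_meas: "T \<in> borel_measurable M"
    and Elig_ev: "Elig \<in> sets M" and Elig_pos: "measure M Elig > 0"
    and Rec_ev: "Rec \<in> sets M"
    and Tstar_pos: "Tstar > 0"
    and phi_meas: "phi \<in> borel_measurable lborel"
    and phi_prob: "\<And>u. 0 \<le> phi u \<and> phi u \<le> 1"
    and phi_tail: "\<And>u. u \<ge> Tstar \<Longrightarrow> phi u = beta"
    and p_range: "0 < p" "p < 1"
    and prev: "cprob M Elig {w \<in> space M. T w \<le> t} = p"
    and lam_nonneg: "\<And>s. s \<le> t \<Longrightarrow> lam s \<ge> 0"
    and lam_int: "set_integrable lborel {..t} lam"
    and density: "\<And>B. B \<in> sets borel \<Longrightarrow> B \<subseteq> {..t} \<Longrightarrow>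
        cprob M Elig {w \<in> space M. T w \<in> B} = (LINT s:B|lborel. lam s * (1 - p))"
    and phi_cond: "\<And>B. B \<in> sets borel \<Longrightarrow> B \<subseteq> {..t} \<Longrightarrow>
        cprob M Elig ({w \<in> space M. T w \<in> B} \<inter> Rec)
          = (LINT s:B|lborel. phi (t - s) * (lam s * (1 - p)))"
    and nondeg: "(LINT u:{0..Tstar}|lborel. phi u) - Tstar * beta \<noteq> 0"
  shows "(let Omega = (LINT u:{0..Tstar}|lborel. phi u);
              Prec = cprob M Elig ({w \<in> space M. T w \<le> t} \<inter> Rec);
              est = (Prec - beta * p) / ((1 - p) * (Omega - Tstar * beta));
              omega = (LINT u:{0..Tstar}|lborel. u * (phi u - beta)) / (Omega - Tstar * beta)
          in est = (LINT u:{0..Tstar}|lborel. (phi u - beta) / (Omega - Tstar * beta) * lam (t - u))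
           \<and> ((\<forall>s\<in>{t - Tstar..t}. lam s = lam t + rho * (t - s)) \<longrightarrow>
                 est = lam t + rho * omega
               \<and> est - lam t = rho * omega
               \<and> (0 \<le> omega \<and> omega \<le> Tstar \<longrightarrow> est = lam (t - omega))))"

proof -
  interpret prob_space M by (rule ps)
  let ?I = "\<lambda>f. integral\<^sup>L lborel (f::real\<Rightarrow>real)"
  define D where "D = (LINT u:{0..Tstar}|lborel. phi u) - Tstar * beta"
  have Dnz: "D \<noteq> 0" using nondeg D_def by simp
  have lamI: "integrable lborel (\<lambda>s. indicator {..t} s * lam s)"
    using lam_int by (simp add: set_integrable_def)
  have lamM: "(\<lambda>s. indicator {..t} s * lam s) \<in> borel_measurable lborel"
    using lamI by auto
  have phiM2: "(\<lambda>s. phi (t - s)) \<in> borel_measurable lborel"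
    using phi_meas by (intro measurable_compose[OF _ phi_meas]) auto
  have prodI: "integrable lborel (\<lambda>s. phi (t - s) * (indicator {..t} s * lam s))"
  proof (rule Bochner_Integration.integrable_bound[OF lamI])
    show "(\<lambda>s. phi (t - s) * (indicator {..t} s * lam s)) \<in> borel_measurable lborel"
      using phiM2 lamM by measurable
    show "AE x in lborel. norm (phi (t - x) * (indicator {..t} x * lam x)) \<le> norm (indicator {..t} x * lam x)"
    proof (rule AE_I2)
      fix x
      have "\<bar>phi (t - x)\<bar> \<le> 1" using phi_prob[of "t-x"] by auto
      then show "norm (phi (t - x) * (indicator {..t} x * lam x)) \<le> norm (indicator {..t} x * lam x)"
        by (simp add: abs_mult mult_left_le_one_le)
    qed
  qed
  have A: "?I (\<lambda>s. indicator {..t} s * lam s) * (1 - p) = p"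
  proof -
    have "cprob M Elig {w \<in> space M. T w \<in> {..t}} = (LINT s:{..t}|lborel. lam s * (1 - p))"
      by (rule density) auto
    moreover have "{w \<in> space M. T w \<in> {..t}} = {w \<in> space M. T w \<le> t}" by auto
    ultimately show ?thesis using prev
      by (simp add: set_lebesgue_integral_def mult.assoc[symmetric] integral_mult_left_zero)
  qed
  have B: "cprob M Elig ({w \<in> space M. T w \<le> t} \<inter> Rec)
      = ?I (\<lambda>s. phi (t - s) * (indicator {..t} s * lam s)) * (1 - p)"
  proof -
    have "cprob M Elig ({w \<in> space M. T w \<in> {..t}} \<inter> Rec) = (LINT s:{..t}|lborel. phi (t - s) * (lam s * (1 - p)))"
      by (rule phi_cond) auto
    moreover have "{w \<in> space M. T w \<in> {..t}} = {w \<in> space M. T w \<le> t}" by auto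
    moreover have "(\<lambda>s. indicator {..t} s * (phi (t - s) * (lam s * (1 - p))))
        = (\<lambda>s. phi (t - s) * (indicator {..t} s * lam s) * (1 - p))" by (auto simp: fun_eq_iff)
    ultimately show ?thesis
      by (simp add: set_lebesgue_integral_def integral_mult_left_zero)
  qed
  have C: "?I (\<lambda>s. phi (t - s) * (indicator {..t} s * lam s))
      = ?I (\<lambda>s. indicator {t - Tstar..t} s * ((phi (t - s) - beta) * lam s))
        + beta * ?I (\<lambda>s. indicator {..t} s * lam s)"
  proof -
    have "?I (\<lambda>s. phi (t - s) * (indicator {..t} s * lam s))
        = ?I (\<lambda>s. phi (t - s) * (indicator {..t} s * lam s) - beta * (indicator {..t} s * lam s))
          + ?I (\<lambda>s. beta * (indicator {..t} s * lam s))"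
      using prodI lamI by (subst Bochner_Integration.integral_diff) auto
    moreover have "(\<lambda>s. phi (t - s) * (indicator {..t} s * lam s) - beta * (indicator {..t} s * lam s))
        = (\<lambda>s. indicator {t - Tstar..t} s * ((phi (t - s) - beta) * lam s))"
    proof
      fix s
      show "phi (t - s) * (indicator {..t} s * lam s) - beta * (indicator {..t} s * lam s)
          = indicator {t - Tstar..t} s * ((phi (t - s) - beta) * lam s)"
      proof (cases "s < t - Tstar")
        case True
        then have "phi (t - s) = beta" by (intro phi_tail) auto
        then show ?thesis using True by (auto simp: indicator_def)
      next
        case False
        then show ?thesis by (auto simp: indicator_def algebra_simps)
      qed
    qed
    ultimately show ?thesis by simp
  qed
  define K where "K = ?I (\<lambda>u. indicator {0..Tstar} u * ((phi u - beta) * lam (t - u)))"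
  have E: "?I (\<lambda>s. indicator {t - Tstar..t} s * ((phi (t - s) - beta) * lam s)) = K"
  proof -
    have "?I (\<lambda>s. indicator {t - Tstar..t} s * ((phi (t - s) - beta) * lam s))
        = \<bar>-1\<bar> *\<^sub>R ?I (\<lambda>x. indicator {t - Tstar..t} (t + -1 * x) * ((phi (t - (t + -1 * x)) - beta) * lam (t + -1 * x)))"
      by (rule lborel_integral_real_affine) simp
    also have "(\<lambda>x. indicator {t - Tstar..t} (t + -1 * x) * ((phi (t - (t + -1 * x)) - beta) * lam (t + -1 * x)))
        = (\<lambda>u. indicator {0..Tstar} u * ((phi u - beta) * lam (t - u)))"
      by (auto simp: fun_eq_iff indicator_def)
    finally show ?thesis by (simp add: K_def)
  qed
  have Prec: "cprob M Elig ({w \<in> space M. T w \<le> t} \<inter> Rec) = (1 - p) * K + beta * p"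
  proof -
    have "cprob M Elig ({w \<in> space M. T w \<le> t} \<inter> Rec)
        = (K + beta * ?I (\<lambda>s. indicator {..t} s * lam s)) * (1 - p)"
      using B C E by simp
    also have "\<dots> = (1 - p) * K + beta * (?I (\<lambda>s. indicator {..t} s * lam s) * (1 - p))"
      by (simp add: algebra_simps)
    finally show ?thesis using A by simp
  qed
  have est: "(cprob M Elig ({w \<in> space M. T w \<le> t} \<inter> Rec) - beta * p) / ((1 - p) * D) = K / D"
    using Prec p_range by simp
  have rhs: "(LINT u:{0..Tstar}|lborel. (phi u - beta) / D * lam (t - u)) = K / D"
  proof -
    have "(\<lambda>u. indicator {0..Tstar} u * ((phi u - beta) / D * lam (t - u)))
        = (\<lambda>u. indicator {0..Tstar} u * ((phi u - beta) * lam (t - u)) / D)"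
      by (auto simp: fun_eq_iff)
    then show ?thesis by (simp add: set_lebesgue_integral_def K_def integral_divide_zero)
  qed
  have part2: "K / D = lam t + rho * ((LINT u:{0..Tstar}|lborel. u * (phi u - beta)) / D)"
    if lin: "\<forall>s\<in>{t - Tstar..t}. lam s = lam t + rho * (t - s)"
  proof -
    have indI: "integrable lborel (\<lambda>u. indicator {0..Tstar} u :: real)"
      using Tstar_pos by (intro integrable_real_indicator) (auto simp: emeasure_lborel_Icc)
    have ind2: "integrable lborel (\<lambda>u. Tstar * indicator {0..Tstar} u :: real)"
      using indI by simp
    have phiI: "integrable lborel (\<lambda>u. indicator {0..Tstar} u * phi u)"
    proof (rule Bochner_Integration.integrable_bound[OF indI])
      show "(\<lambda>u. indicator {0..Tstar} u * phi u) \<in> borel_measurable lborel"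
        using phi_meas by measurable
      show "AE x in lborel. norm (indicator {0..Tstar} x * phi x) \<le> norm (indicator {0..Tstar} x :: real)"
        using phi_prob by (auto simp: indicator_def)
    qed
    have uI: "integrable lborel (\<lambda>u. indicator {0..Tstar} u * u)"
    proof (rule Bochner_Integration.integrable_bound[OF ind2])
      show "(\<lambda>u. indicator {0..Tstar} u * u) \<in> borel_measurable lborel"
        by measurable
      show "AE x in lborel. norm (indicator {0..Tstar} x * x) \<le> norm (Tstar * indicator {0..Tstar} x :: real)"
        using Tstar_pos by (auto simp: indicator_def)
    qed
    have uphiI: "integrable lborel (\<lambda>u. indicator {0..Tstar} u * (u * phi u))"
    proof (rule Bochner_Integration.integrable_bound[OF ind2])
      show "(\<lambda>u. indicator {0..Tstar} u * (u * phi u)) \<in> borel_measurable lborel"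
        using phi_meas by measurable
      show "AE x in lborel. norm (indicator {0..Tstar} x * (x * phi x)) \<le> norm (Tstar * indicator {0..Tstar} x :: real)"
      proof (rule AE_I2)
        fix x
        show "norm (indicator {0..Tstar} x * (x * phi x)) \<le> norm (Tstar * indicator {0..Tstar} x :: real)"
        proof (cases "x \<in> {0..Tstar}")
          case True
          have p0: "0 \<le> phi x" "phi x \<le> 1" using phi_prob[of x] by auto
          have x0: "0 \<le> x" "x \<le> Tstar" using True by auto
          have "x * phi x \<le> Tstar * 1"
            by (rule mult_mono) (use p0 x0 in auto)
          moreover have "0 \<le> x * phi x" using p0 x0 by simp
          ultimately show ?thesis using True by simp
        qed simp
      qed
    qed
    have measT: "?I (\<lambda>u. indicator {0..Tstar} u :: real) = Tstar"
      using Tstar_pos by simp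
    have Kx: "K = ?I (\<lambda>u. lam t * (indicator {0..Tstar} u * phi u - beta * indicator {0..Tstar} u)
                  + rho * (indicator {0..Tstar} u * (u * phi u) - beta * (indicator {0..Tstar} u * u)))"
      unfolding K_def
    proof (rule Bochner_Integration.integral_cong[OF refl])
      fix u
      show "indicator {0..Tstar} u * ((phi u - beta) * lam (t - u))
          = lam t * (indicator {0..Tstar} u * phi u - beta * indicator {0..Tstar} u)
            + rho * (indicator {0..Tstar} u * (u * phi u) - beta * (indicator {0..Tstar} u * u))"
      proof (cases "u \<in> {0..Tstar}")
        case True
        then have "t - u \<in> {t - Tstar..t}" by auto
        from lin[rule_format, OF this] have "lam (t - u) = lam t + rho * u" by simp
        then show ?thesis using True by (simp add: algebra_simps)
      qed simp
    qed
    also have "\<dots> = lam t * (?I (\<lambda>u. indicator {0..Tstar} u * phi u) - beta * Tstar)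
        + rho * (?I (\<lambda>u. indicator {0..Tstar} u * (u * phi u)) - beta * ?I (\<lambda>u. indicator {0..Tstar} u * u))"
      using indI phiI uI uphiI measT by simp
    finally have K2: "K = lam t * D + rho * ?I (\<lambda>u. indicator {0..Tstar} u * (u * (phi u - beta)))"
    proof -
      assume K1: "K = lam t * (?I (\<lambda>u. indicator {0..Tstar} u * phi u) - beta * Tstar)
        + rho * (?I (\<lambda>u. indicator {0..Tstar} u * (u * phi u)) - beta * ?I (\<lambda>u. indicator {0..Tstar} u * u))"
      have "?I (\<lambda>u. indicator {0..Tstar} u * (u * (phi u - beta)))
          = ?I (\<lambda>u. indicator {0..Tstar} u * (u * phi u) - beta * (indicator {0..Tstar} u * u))"
        by (rule Bochner_Integration.integral_cong) (auto simp: algebra_simps)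
      also have "\<dots> = ?I (\<lambda>u. indicator {0..Tstar} u * (u * phi u)) - beta * ?I (\<lambda>u. indicator {0..Tstar} u * u)"
        using uphiI uI by simp
      finally have X: "?I (\<lambda>u. indicator {0..Tstar} u * (u * (phi u - beta)))
          = ?I (\<lambda>u. indicator {0..Tstar} u * (u * phi u)) - beta * ?I (\<lambda>u. indicator {0..Tstar} u * u)" .
      have Dform: "D = ?I (\<lambda>u. indicator {0..Tstar} u * phi u) - beta * Tstar"
        by (simp add: D_def set_lebesgue_integral_def mult.commute)
      show ?thesis by (simp only: K1 Dform X)
    qed
    show ?thesis using K2 Dnz by (simp add: set_lebesgue_integral_def field_simps)
  qed
  show ?thesis
    unfolding Let_def D_def[symmetric]
  proof (intro conjI impI)
    show "(cprob M Elig ({w \<in> space M. T w \<le> t} \<inter> Rec) - beta * p) / ((1 - p) * D) =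
        (LINT u:{0..Tstar}|lborel. (phi u - beta) / D * lam (t - u))"
      by (simp only: est rhs)
  next
    assume lin: "\<forall>s\<in>{t - Tstar..t}. lam s = lam t + rho * (t - s)"
    show "(cprob M Elig ({w \<in> space M. T w \<le> t} \<inter> Rec) - beta * p) / ((1 - p) * D) =
        lam t + rho * ((LINT u:{0..Tstar}|lborel. u * (phi u - beta)) / D)"
      using est part2[OF lin] by simp
    then show "(cprob M Elig ({w \<in> space M. T w \<le> t} \<inter> Rec) - beta * p) / ((1 - p) * D) - lam t =
        rho * ((LINT u:{0..Tstar}|lborel. u * (phi u - beta)) / D)" by simp
  next
    assume lin: "\<forall>s\<in>{t - Tstar..t}. lam s = lam t + rho * (t - s)"
      and om: "0 \<le> (LINT u:{0..Tstar}|lborel. u * (phi u - beta)) / D \<and>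
          (LINT u:{0..Tstar}|lborel. u * (phi u - beta)) / D \<le> Tstar"
    let ?om = "(LINT u:{0..Tstar}|lborel. u * (phi u - beta)) / D"
    have "t - ?om \<in> {t - Tstar..t}" using om by auto
    from lin[rule_format, OF this] have "lam (t - ?om) = lam t + rho * (t - (t - ?om))" .
    then show "(cprob M Elig ({w \<in> space M. T w \<le> t} \<inter> Rec) - beta * p) / ((1 - p) * D) =
        lam (t - ?om)"
      using est part2[OF lin] by simp
  qed
qed

end
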